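(* Let $\mathbf H=\mathbf g\mathbf h^T$ with $\mathbf g\in\mathbb C^{M_R}$, $\mathbf h\in\mathbb C^{M_T}$, let $\mathbf\Theta\in\mathbb C^{M_R\times M_T}$ have full rank, and set $\hat{\mathbf H}=\mathbf H\circ\mathbf\Theta$. If $M_R\le M_T$, there exist numbers $\varepsilon_1,\dots,\varepsilon_{M_R}$ with $\min_i|[\mathbf h]_i|^2\le\varepsilon_i\le\max_i|[\mathbf h]_i|^2$ such that $$\det(\hat{\mathbf H}\hat{\mathbf H}^H)=\Big(\prod_{i=1}^{M_R}|[\mathbf g]_i|^2\varepsilon_i\Big)\det(\mathbf\Theta\mathbf\Theta^H).$$ If $M_R\ge M_T$, there exist numbers $\nu_1,\dots,\nu_{M_T}$ with $\min_i|[\mathbf g]_i|^2\le\nu_i\le\max_i|[\mathbf g]_i|^2$ such that $$\det(\hat{\mathbf H}^H\hat{\mathbf H})=\Big(\prod_{i=1}^{M_T}|[\mathbf h]_i|^2\nu_i\Big)\det(\mathbf\Theta^H\mathbf\Theta).$$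
   Context: $\circ$ denotes the Hadamard (entrywise) product; $[\mathbf x]_i$ is the $i$th entry of $\mathbf x$. *)

theory Defs
  imports "HOL-Analysis.Analysis"
begin

definition herm :: "complex^'n^'m \<Rightarrow> complex^'m^'n" where
  "herm A = (\<chi> i j. cnj (A $ j $ i))"

definition hadamard :: "complex^'n^'m \<Rightarrow> complex^'n^'m \<Rightarrow> complex^'n^'m" where
  "hadamard A B = (\<chi> i j. A $ i $ j * B $ i $ j)"

definition outer :: "complex^'m \<Rightarrow> complex^'n \<Rightarrow> complex^'n^'m" where
  "outer g h = (\<chi> i j. g $ i * h $ j)"

end

theory Submission
  imports Defs
begin


lemma herm_herm[simp]: "herm (herm A) = A"
  by (simp add: herm_def vec_eq_iff)

lemma cnj_det: "cnj (det (A::complex^'n^'n)) = det (\<chi> i j. cnj (A$i$j))"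
  by (simp add: det_def cnj_sum cnj_prod)

lemma expand:
  fixes X :: "complex^'t::finite^'r::finite"
  shows "det (X ** herm X) = (\<Sum>f\<in>(UNIV::('r\<Rightarrow>'t) set).
     (\<Prod>i\<in>UNIV. X$i$(f i)) * cnj (det (\<chi> i j. X$j$(f i))))"
proof -
  have "det (X ** herm X) = (\<Sum>p\<in>{p. p permutes (UNIV::'r set)}. of_int (sign p) *
      (\<Prod>i\<in>UNIV. \<Sum>k\<in>UNIV. X$i$k * cnj (X$(p i)$k)))"
    by (simp add: det_def matrix_matrix_mult_def herm_def)
  also have "\<dots> = (\<Sum>p\<in>{p. p permutes (UNIV::'r set)}. of_int (sign p) *
      (\<Sum>f\<in>(UNIV::('r\<Rightarrow>'t) set). \<Prod>i\<in>UNIV. X$i$(f i) * cnj (X$(p i)$(f i))))"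
    by (simp add: prod_sum_PiE PiE_UNIV_domain)
  also have "\<dots> = (\<Sum>f\<in>(UNIV::('r\<Rightarrow>'t) set). (\<Prod>i\<in>UNIV. X$i$(f i)) *
      (\<Sum>p\<in>{p. p permutes (UNIV::'r set)}. of_int (sign p) * (\<Prod>i\<in>UNIV. cnj (X$(p i)$(f i)))))"
    by (simp add: sum_distrib_left prod.distrib mult_ac sum.swap[of _ "{p. p permutes UNIV}"])
  also have "\<dots> = (\<Sum>f\<in>(UNIV::('r\<Rightarrow>'t) set).
     (\<Prod>i\<in>UNIV. X$i$(f i)) * cnj (det (\<chi> i j. X$j$(f i))))"
    by (simp add: cnj_det det_def[where A="\<chi> i j. cnj (X$j$(f i))" for f])
  finally show ?thesis .
qed

lemma symm:
  fixes X :: "complex^'t::finite^'r::finite"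
  shows "of_nat (fact CARD('r)) * det (X ** herm X) = (\<Sum>f\<in>(UNIV::('r\<Rightarrow>'t) set).
     complex_of_real ((cmod (det (\<chi> i j. X$i$(f j))))\<^sup>2))"
proof -
  define P where "P f = (\<Prod>i\<in>UNIV. X$i$(f i))" for f :: "'r \<Rightarrow> 't"
  define N where "N f = (\<chi> i j. X$j$(f i) :: complex^'r^'r)" for f :: "'r \<Rightarrow> 't"
  define M where "M f = (\<chi> i j. X$i$(f j) :: complex^'r^'r)" for f :: "'r \<Rightarrow> 't"
  define T where "T f = P f * cnj (det (N f))" for f
  let ?PU = "{p. p permutes (UNIV::'r set)}"
  have NM: "det (N f) = det (M f)" for f
  proof -
    have "N f = transpose (M f)" by (simp add: N_def M_def transpose_def vec_eq_iff)
    then show ?thesis by simp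
  qed
  have step: "sum T UNIV = (\<Sum>f\<in>UNIV. P (f \<circ> s) * of_int (sign s) * cnj (det (N f)))"
    if s: "s permutes (UNIV::'r set)" for s
  proof -
    have "sum T UNIV = (\<Sum>f\<in>UNIV. T (f \<circ> s))"
      by (rule sum.reindex_bij_witness[where j="\<lambda>f. f \<circ> inv s" and i="\<lambda>f. f \<circ> s"])
         (simp_all add: comp_assoc permutes_inv_o[OF s])
    also have "\<dots> = (\<Sum>f\<in>UNIV. P (f \<circ> s) * of_int (sign s) * cnj (det (N f)))"
    proof (rule sum.cong[OF refl])
      fix f :: "'r \<Rightarrow> 't"
      have "N (f \<circ> s) = (\<chi> i. N f $ s i)" by (simp add: N_def vec_eq_iff)
      then have "det (N (f \<circ> s)) = of_int (sign s) * det (N f)"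
        using det_permute_rows[OF s] by simp
      then show "T (f \<circ> s) = P (f \<circ> s) * of_int (sign s) * cnj (det (N f))"
        by (simp add: T_def)
    qed
    finally show ?thesis .
  qed
  have "of_nat (card ?PU) * sum T UNIV = (\<Sum>s\<in>?PU. sum T UNIV)" by simp
  also have "\<dots> = (\<Sum>s\<in>?PU. \<Sum>f\<in>UNIV. P (f \<circ> s) * of_int (sign s) * cnj (det (N f)))"
    by (rule sum.cong[OF refl]) (simp add: step)
  also have "\<dots> = (\<Sum>f\<in>UNIV. cnj (det (N f)) * (\<Sum>s\<in>?PU. of_int (sign s) * P (f \<circ> s)))"
    by (subst sum.swap) (simp add: sum_distrib_left mult_ac)
  also have "\<dots> = (\<Sum>f\<in>UNIV. cnj (det (M f)) * det (M f))"
  proof -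
    have "(\<Sum>s\<in>?PU. of_int (sign s) * P (f \<circ> s)) = det (M f)" for f
      by (simp add: det_def M_def P_def)
    then show ?thesis by (simp add: NM)
  qed
  also have "\<dots> = (\<Sum>f\<in>UNIV. complex_of_real ((cmod (det (M f)))\<^sup>2))"
    by (rule sum.cong[OF refl]) (metis complex_norm_square mult.commute)
  finally have "of_nat (card ?PU) * sum T UNIV = (\<Sum>f\<in>UNIV. complex_of_real ((cmod (det (M f)))\<^sup>2))" .
  moreover have "card ?PU = fact CARD('r)" by (rule card_permutations) auto
  moreover have "det (X ** herm X) = sum T UNIV" by (simp add: expand T_def P_def N_def)
  ultimately show ?thesis by (simp add: M_def)
qed

lemma det_scale:
  fixes X :: "complex^'t::finite^'r::finite" and f :: "'r \<Rightarrow> 't"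
  shows "det (\<chi> i j. (\<chi> i j. a i * b j * X$i$j :: complex^'t^'r)$i$(f j) :: complex^'r^'r)
     = (\<Prod>i\<in>UNIV. a i) * (\<Prod>j\<in>UNIV. b (f j)) * det (\<chi> i j. X$i$(f j) :: complex^'r^'r)"
proof -
  have "(\<Prod>i\<in>UNIV. a i * b (f (p i)) * X$i$(f (p i))) =
        (\<Prod>i\<in>UNIV. a i) * (\<Prod>j\<in>UNIV. b (f j)) * (\<Prod>i\<in>UNIV. X$i$(f (p i)))"
    if p: "p permutes (UNIV::'r set)" for p
  proof -
    have "(\<Prod>i\<in>UNIV. b (f (p i))) = (\<Prod>j\<in>UNIV. b (f j))"
      using prod.permute[OF p, of "\<lambda>j. b (f j)"] by (simp add: o_def)
    then show ?thesis by (simp add: prod.distrib)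
  qed
  then show ?thesis
    by (simp add: det_def sum_distrib_left mult_ac)
qed

lemma main:
  fixes X :: "complex^'t::finite^'r::finite" and a :: "'r \<Rightarrow> complex" and b :: "'t \<Rightarrow> complex"
  defines "Y \<equiv> (\<chi> i j. a i * b j * X$i$j :: complex^'t^'r)"
  shows "\<exists>c::real. (MIN j. (cmod (b j))\<^sup>2) \<le> c \<and> c \<le> (MAX j. (cmod (b j))\<^sup>2) \<and>
     det (Y ** herm Y) = complex_of_real (\<Prod>i\<in>UNIV. (cmod (a i))\<^sup>2 * c) * det (X ** herm X)"
proof -
  define m where "m = (MIN j. (cmod (b j))\<^sup>2)"
  define Mx where "Mx = (MAX j. (cmod (b j))\<^sup>2)"
  define n where "n = CARD('r)"
  define cf where "cf f = (cmod (det (\<chi> i j. X$i$(f j) :: complex^'r^'r)))\<^sup>2" for f :: "'r \<Rightarrow> 't"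
  define wf where "wf f = (\<Prod>j\<in>UNIV. (cmod (b (f j)))\<^sup>2)" for f :: "'r \<Rightarrow> 't"
  define A where "A = (\<Prod>i\<in>UNIV. (cmod (a i))\<^sup>2)"
  define R where "R = (\<Sum>f\<in>(UNIV::('r\<Rightarrow>'t) set). cf f)"
  define S where "S = (\<Sum>f\<in>(UNIV::('r\<Rightarrow>'t) set). wf f * cf f)"
  have n0: "n > 0" by (simp add: n_def)
  have mle: "m \<le> (cmod (b j))\<^sup>2" for j unfolding m_def by (intro Min_le) auto
  have leM: "(cmod (b j))\<^sup>2 \<le> Mx" for j unfolding Mx_def by (intro Max_ge) auto
  have m0: "0 \<le> m" unfolding m_def by (subst Min_ge_iff) auto
  have cf0: "0 \<le> cf f" for f by (simp add: cf_def)
  have R0: "0 \<le> R" unfolding R_def by (intro sum_nonneg cf0)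
  have wlo: "m ^ n \<le> wf f" for f
  proof -
    have "(\<Prod>j\<in>(UNIV::'r set). m) \<le> wf f"
      unfolding wf_def by (intro prod_mono) (auto simp: m0 mle)
    then show ?thesis by (simp add: n_def)
  qed
  have whi: "wf f \<le> Mx ^ n" for f
  proof -
    have "wf f \<le> (\<Prod>j\<in>(UNIV::'r set). Mx)"
      unfolding wf_def by (intro prod_mono) (auto simp: leM)
    then show ?thesis by (simp add: n_def)
  qed
  have Slo: "m ^ n * R \<le> S"
    unfolding R_def S_def sum_distrib_left by (intro sum_mono mult_right_mono wlo cf0)
  have Shi: "S \<le> Mx ^ n * R"
    unfolding R_def S_def sum_distrib_left by (intro sum_mono mult_right_mono whi cf0)
  obtain c where cm: "m \<le> c" and cM: "c \<le> Mx" and cS: "c ^ n * R = S"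
  proof (cases "R = 0")
    case True
    then have "S = 0" using Slo Shi by simp
    moreover have "m \<le> Mx" using mle[of undefined] leM[of undefined] by simp
    ultimately show ?thesis using that[of m] True by simp
  next
    case False
    then have Rp: "R > 0" using R0 by simp
    define c where "c = root n (S / R)"
    have q0: "0 \<le> S / R" using Slo Rp m0 by (smt (verit) divide_nonneg_pos mult_nonneg_nonneg zero_le_power)
    have "c ^ n = S / R" unfolding c_def using n0 q0 by (simp add: real_root_pow_pos2)
    then have "c ^ n * R = S" using Rp by simp
    moreover have "m \<le> c"
    proof -
      have "m ^ n \<le> S / R" using Slo Rp by (simp add: pos_le_divide_eq)
      then have "root n (m ^ n) \<le> c" unfolding c_def using n0 by simp
      then show ?thesis using m0 n0 by (simp add: real_root_power_cancel)
    qed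
    moreover have "c \<le> Mx"
    proof -
      have M0: "0 \<le> Mx" using m0 mle[of undefined] leM[of undefined] by simp
      have "S / R \<le> Mx ^ n" using Shi Rp by (simp add: pos_divide_le_eq)
      then have "c \<le> root n (Mx ^ n)" unfolding c_def using n0 by simp
      then show ?thesis using M0 n0 by (simp add: real_root_power_cancel)
    qed
    ultimately show ?thesis using that by blast
  qed
  have F0: "(of_nat (fact n) :: complex) \<noteq> 0" by simp
  have eY: "of_nat (fact n) * det (Y ** herm Y) = complex_of_real (A * S)"
  proof -
    have "of_nat (fact n) * det (Y ** herm Y) = (\<Sum>f\<in>(UNIV::('r\<Rightarrow>'t) set).
       complex_of_real ((cmod (det (\<chi> i j. Y$i$(f j) :: complex^'r^'r)))\<^sup>2))"
      unfolding n_def by (rule symm)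
    also have "\<dots> = (\<Sum>f\<in>(UNIV::('r\<Rightarrow>'t) set). complex_of_real (A * (wf f * cf f)))"
    proof (rule sum.cong[OF refl])
      fix f :: "'r \<Rightarrow> 't"
      show "complex_of_real ((cmod (det (\<chi> i j. Y$i$(f j) :: complex^'r^'r)))\<^sup>2) =
            complex_of_real (A * (wf f * cf f))"
      proof -
        have "(cmod (det (\<chi> i j. Y$i$(f j) :: complex^'r^'r)))\<^sup>2 = A * (wf f * cf f)"
          unfolding Y_def det_scale A_def wf_def cf_def
          by (simp add: norm_mult prod_norm[symmetric] power_mult_distrib prod_power_distrib)
        then show ?thesis by simp
      qed
    qed
    also have "\<dots> = complex_of_real (A * S)"
      by (simp add: S_def sum_distrib_left)
    finally show ?thesis .
  qed
  have eX: "of_nat (fact n) * det (X ** herm X) = complex_of_real R"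
    unfolding n_def R_def cf_def by (subst symm) simp
  have "of_nat (fact n) * det (Y ** herm Y) =
        of_nat (fact n) * (complex_of_real (A * c ^ n) * det (X ** herm X))"
  proof -
    have "of_nat (fact n) * (complex_of_real (A * c ^ n) * det (X ** herm X)) =
          complex_of_real (A * c ^ n) * (of_nat (fact n) * det (X ** herm X))" by (simp add: mult_ac)
    also have "\<dots> = complex_of_real (A * (c ^ n * R))" using eX by simp
    finally have "of_nat (fact n) * (complex_of_real (A * c ^ n) * det (X ** herm X)) =
       complex_of_real (A * S)" using cS by simp
    then show ?thesis using eY by (metis (no_types, lifting))
  qed
  then have "det (Y ** herm Y) = complex_of_real (A * c ^ n) * det (X ** herm X)"
    using F0 by simp
  moreover have "(\<Prod>i\<in>UNIV. (cmod (a i))\<^sup>2 * c) = A * c ^ n"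
    by (simp add: A_def prod.distrib n_def)
  ultimately show ?thesis using cm cM unfolding m_def Mx_def by metis
qed



theorem theorem2:
  fixes g :: "complex^'r::finite" and h :: "complex^'t::finite"
    and \<Theta> :: "complex^'t^'r"
  assumes full_rank: "rank \<Theta> = min CARD('r) CARD('t)"
  defines "Hh \<equiv> hadamard (outer g h) \<Theta>"
  shows "(CARD('r) \<le> CARD('t) \<longrightarrow>
           (\<exists>\<epsilon> :: 'r \<Rightarrow> real.
              (\<forall>i. (MIN j. (cmod (h $ j))\<^sup>2) \<le> \<epsilon> i \<and> \<epsilon> i \<le> (MAX j. (cmod (h $ j))\<^sup>2)) \<and>
              det (Hh ** herm Hh) =
                complex_of_real (\<Prod>i\<in>UNIV. (cmod (g $ i))\<^sup>2 * \<epsilon> i) * det (\<Theta> ** herm \<Theta>)))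
       \<and> (CARD('t) \<le> CARD('r) \<longrightarrow>
           (\<exists>\<nu> :: 't \<Rightarrow> real.
              (\<forall>i. (MIN j. (cmod (g $ j))\<^sup>2) \<le> \<nu> i \<and> \<nu> i \<le> (MAX j. (cmod (g $ j))\<^sup>2)) \<and>
              det (herm Hh ** Hh) =
                complex_of_real (\<Prod>i\<in>UNIV. (cmod (h $ i))\<^sup>2 * \<nu> i) * det (herm \<Theta> ** \<Theta>)))"
  proof -
  have H1: "Hh = (\<chi> i j. g$i * h$j * \<Theta>$i$j)"
    by (simp add: Hh_def hadamard_def outer_def vec_eq_iff)
  have H2: "herm Hh = (\<chi> i j. cnj (h$i) * cnj (g$j) * (herm \<Theta>)$i$j)"
    by (simp add: H1 herm_def vec_eq_iff)
  have P1: "\<exists>\<epsilon> :: 'r \<Rightarrow> real.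
              (\<forall>i. (MIN j. (cmod (h $ j))\<^sup>2) \<le> \<epsilon> i \<and> \<epsilon> i \<le> (MAX j. (cmod (h $ j))\<^sup>2)) \<and>
              det (Hh ** herm Hh) =
                complex_of_real (\<Prod>i\<in>UNIV. (cmod (g $ i))\<^sup>2 * \<epsilon> i) * det (\<Theta> ** herm \<Theta>)"
  proof -
    obtain c where "(MIN j. (cmod (h$j))\<^sup>2) \<le> c" "c \<le> (MAX j. (cmod (h$j))\<^sup>2)"
      "det (Hh ** herm Hh) = complex_of_real (\<Prod>i\<in>UNIV. (cmod (g$i))\<^sup>2 * c) * det (\<Theta> ** herm \<Theta>)"
      using main[where X=\<Theta> and a="\<lambda>i. g$i" and b="\<lambda>j. h$j"] unfolding H1[symmetric] by blast
    then show ?thesis by (intro exI[of _ "\<lambda>_. c"]) simp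
  qed
  have P2: "\<exists>\<nu> :: 't \<Rightarrow> real.
              (\<forall>i. (MIN j. (cmod (g $ j))\<^sup>2) \<le> \<nu> i \<and> \<nu> i \<le> (MAX j. (cmod (g $ j))\<^sup>2)) \<and>
              det (herm Hh ** Hh) =
                complex_of_real (\<Prod>i\<in>UNIV. (cmod (h $ i))\<^sup>2 * \<nu> i) * det (herm \<Theta> ** \<Theta>)"
  proof -
    obtain c where "(MIN j. (cmod (cnj (g$j)))\<^sup>2) \<le> c" "c \<le> (MAX j. (cmod (cnj (g$j)))\<^sup>2)"
      "det (herm Hh ** herm (herm Hh)) = complex_of_real (\<Prod>i\<in>UNIV. (cmod (cnj (h$i)))\<^sup>2 * c) * det (herm \<Theta> ** herm (herm \<Theta>))"
      using main[where X="herm \<Theta>" and a="\<lambda>i. cnj (h$i)" and b="\<lambda>j. cnj (g$j)"] unfolding H2[symmetric] by blast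
    then show ?thesis by (intro exI[of _ "\<lambda>_. c"]) simp
  qed
  show ?thesis using P1 P2 by blast
qed

end
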